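(* Let $1\le l\le m$ and $0\le r\le\lfloor(m-l-1)/2\rfloor$. Then the binary convolutional code $C=\Gamma_2G$ generated by the semi-infinite matrix $G$ described in the context is self-orthogonal, i.e. $C\subseteq C^\perp$.
   Context: For $u,v\in\mathbf F_2^N$ the boolean product is $uv=(u_1v_1,\dots,u_Nv_N)$. For $s\ge1$ let $b_0\in\mathbf F_2^{2^s}$ be all-ones and for $1\le i\le s$ let $b_i\in\mathbf F_2^{2^s}$ be the concatenation of $2^{s-i}$ blocks $(\mathbf 0\,\mathbf 1)$ with $\mathbf 0,\mathbf 1\in\mathbf F_2^{2^{i-1}}$ constant. Let $B_s^i$ be the matrix whose rows are all products of $i$ distinct elements of $\{b_1,\dots,b_s\}$ ($B_s^0=b_0$; empty for $i<0$ or $i>s$), and $G_s^r$ the matrix with rows $B_s^r,\dots,B_s^0$ stacked (empty if $r<0$), a generator matrix of the Reed–Muller code $\mathcal R(r,s)$. Let $w_j=(1,1,0,\dots,0)\in\mathbf F_2^{2^j}$ and $c\,w_j$ the concatenation of $c$ copies. For $0\le i\le l-1$, $M_{i,l}=(2^{l-i-1}w_{i+1})\otimes B_{m-l}^{r-i}$ (Kronecker product), and $M_{l,l}=[G_{m-l}^{r-l}\ 0\ \cdots\ 0]$ with $2^m$ columns. Define $G_0,\dots,G_{2^l-1}$ (each with $2^{m-l}$ columns) by $[G_0\ \cdots\ G_{2^l-1}]$ = row blocks $M_{0,l},\dots,M_{l,l}$ stacked. $G$ is the semi-infinite matrix whose $j$-th block row has $G_0,\dots,G_{2^l-1}$ in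 block columns $j,\dots,j+2^l-1$ and zeros elsewhere. $\Gamma_2$ = finitely supported binary sequences; $C^\perp$ is the Euclidean dual in $\Gamma_2$. *)

theory Defs
  imports Main "HOL-Library.Z2"
begin

text \<open>Binary vectors of finite length are lists over the field bit = F_2;
  matrices are lists of rows.\<close>

type_synonym vec = "bit list"
type_synonym mat = "bit list list"

definition bprod :: "vec \<Rightarrow> vec \<Rightarrow> vec" where
  "bprod u v = map2 (*) u v"

text \<open>b_0 = all ones of length 2^s; for 1 \<le> i \<le> s, b_i is 2^(s-i) blocks (0 1),
  each of 0, 1 constant of length 2^(i-1). (0-based position k is 1 iff
  k div 2^(i-1) is odd.)\<close>
definition bvec :: "nat \<Rightarrow> nat \<Rightarrow> vec" where
  "bvec s i = (if i = 0 then replicate (2^s) 1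
     else map (\<lambda>k. if odd (k div 2^(i-1)) then 1 else 0) [0..<2^s])"

text \<open>B_s^i: rows are all products of i distinct elements of {b_1,...,b_s}
  (each i-subset taken once); B_s^0 = b_0; empty for i < 0 or i > s.\<close>
definition Bmat :: "nat \<Rightarrow> int \<Rightarrow> mat" where
  "Bmat s i = (if i < 0 then []
     else map (\<lambda>S. foldr bprod (map (bvec s) S) (bvec s 0))
              (filter (\<lambda>S. int (length S) = i) (subseqs [1..<s+1])))"

definition Gmat_RM :: "nat \<Rightarrow> int \<Rightarrow> mat" where
  "Gmat_RM s r = concat (map (Bmat s) (rev [0..r]))"

definition wvec :: "nat \<Rightarrow> vec" where
  "wvec j = [1,1] @ replicate (2^j - 2) 0"

definition rep_vec :: "nat \<Rightarrow> vec \<Rightarrow> vec" where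
  "rep_vec c v = concat (replicate c v)"

definition kron_row :: "vec \<Rightarrow> mat \<Rightarrow> mat" where
  "kron_row a B = map (\<lambda>\<beta>. concat (map (\<lambda>x. map ((*) x) \<beta>) a)) B"

definition Mblk :: "nat \<Rightarrow> nat \<Rightarrow> int \<Rightarrow> nat \<Rightarrow> mat" where
  "Mblk m l r i = (if i < l
     then kron_row (rep_vec (2^(l-i-1)) (wvec (i+1))) (Bmat (m-l) (r - int i))
     else map (\<lambda>g. g @ replicate (2^m - length g) 0) (Gmat_RM (m-l) (r - int l)))"

text \<open>The stacked matrix [G_0 ... G_{2^l-1}] = M_{0,l}; ...; M_{l,l}.\<close>
definition Mstack :: "nat \<Rightarrow> nat \<Rightarrow> int \<Rightarrow> mat" where
  "Mstack m l r = concat (map (Mblk m l r) [0..<l+1])"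

text \<open>The semi-infinite matrix G: row index q = j * k + \<rho> (block row j, row \<rho> of the
  stack, k = number of rows of the stack), column index p. Its j-th block row is the
  stack shifted right by j block columns of width 2^(m-l).\<close>
definition semiG :: "nat \<Rightarrow> nat \<Rightarrow> int \<Rightarrow> nat \<Rightarrow> nat \<Rightarrow> bit" where
  "semiG m l r q p = (let M = Mstack m l r; k = length M; n = 2^(m-l);
      j = q div k; \<rho> = q mod k in
      if j * n \<le> p \<and> p < j * n + 2^m then (M ! \<rho>) ! (p - j * n) else 0)"

definition Gamma2 :: "(nat \<Rightarrow> bit) set" where
  "Gamma2 = {v. finite {p. v p \<noteq> 0}}"

text \<open>The code \<Gamma>_2 G generated by a semi-infinite matrix (row index \<Rightarrow> column index \<Rightarrow> entry).\<close>
definition gen_code :: "(nat \<Rightarrow> nat \<Rightarrow> bit) \<Rightarrow> (nat \<Rightarrow> bit) set" where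
  "gen_code Gm = {c. \<exists>u \<in> Gamma2. c = (\<lambda>p. \<Sum>q\<in>{q. u q \<noteq> 0}. u q * Gm q p)}"

definition inner2 :: "(nat \<Rightarrow> bit) \<Rightarrow> (nat \<Rightarrow> bit) \<Rightarrow> bit" where
  "inner2 u v = (\<Sum>p\<in>{p. u p \<noteq> 0 \<and> v p \<noteq> 0}. u p * v p)"

definition dual_code :: "(nat \<Rightarrow> bit) set \<Rightarrow> (nat \<Rightarrow> bit) set" where
  "dual_code C = {v \<in> Gamma2. \<forall>c \<in> C. inner2 c v = 0}"

end

theory Submission
  imports Defs
begin

definition monoB :: "nat set \<Rightarrow> nat \<Rightarrow> bit" where
  "monoB U k = (if \<forall>i\<in>U. odd (k div 2^i) then 1 else 0)"

lemma bit_self_add: "(x::bit) + x = 0"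
  by (cases x) simp_all

lemma div_shift_parity:
  assumes "(k::nat) < 2^s" "i \<noteq> s"
  shows "odd ((k + 2^s) div 2^i) = odd (k div 2^i)"
proof (cases "i < s")
  case True
  have "(k + 2^s) div 2^i = k div 2^i + 2^(s-i)"
  proof -
    have "(2::nat)^s = 2^(s-i) * 2^i" using True by (simp flip: power_add)
    then show ?thesis by simp
  qed
  then show ?thesis using True by simp
next
  case False
  then have "s < i" using assms by simp
  then have "(2::nat)^(Suc s) \<le> 2^i" by (intro power_increasing) auto
  then have "k + 2^s < 2^i" "k < 2^i" using assms by auto
  then show ?thesis by simp
qed

lemma sum_double: "(\<Sum>k<2*N. f k) = (\<Sum>k<N. f k) + (\<Sum>k<N. f (k + N))" for f :: "nat \<Rightarrow> 'a::comm_monoid_add"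
proof -
  have "(\<Sum>k<2*N. f k) = (\<Sum>k<N. f k) + (\<Sum>k\<in>{N..<N+N}. f k)"
    by (metis lessThan_atLeast0 mult_2 sum.atLeastLessThan_concat le_add1 zero_le)
  also have "(\<Sum>k\<in>{N..<N+N}. f k) = (\<Sum>k<N. f (k + N))"
    by (metis add_0 lessThan_atLeast0 sum.shift_bounds_nat_ivl)
  finally show ?thesis .
qed

lemma monoB_sum_zero: "i0 < s \<Longrightarrow> i0 \<notin> U \<Longrightarrow> (\<Sum>k<2^s. monoB U k) = 0"
proof (induction s arbitrary: U)
  case 0 then show ?case by simp
next
  case (Suc s)
  have split: "(\<Sum>k<2^Suc s. monoB U k) = (\<Sum>k<2^s. monoB U k) + (\<Sum>k<2^s. monoB U (k + 2^s))"
    using sum_double[where N="2^s" and f="monoB U"] by simp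
  show ?case
  proof (cases "s \<in> U")
    case False
    have "monoB U (k + 2^s) = monoB U k" if "k < 2^s" for k
      unfolding monoB_def using div_shift_parity[OF that] False by metis
    then have "(\<Sum>k<2^s. monoB U (k + 2^s)) = (\<Sum>k<2^s. monoB U k)" by (intro sum.cong) auto
    then show ?thesis using split bit_self_add by simp
  next
    case True
    have a: "monoB U k = 0" if "k < 2^s" for k
      unfolding monoB_def using True that by (metis div_less even_zero)
    have b: "monoB U (k + 2^s) = monoB (U - {s}) k" if "k < 2^s" for k
    proof -
      have "(k + 2^s) div 2^s = k div 2^s + 1" by (metis div_add_self2 power_not_zero zero_neq_numeral)
      then have "odd ((k + 2^s) div 2^s)" using that by (simp add: div_less)
      then show ?thesis unfolding monoB_def using div_shift_parity[OF that] by (metis DiffE DiffI singletonD singletonI)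
    qed
    have "i0 < s" using Suc.prems True by (metis less_SucE)
    then have "(\<Sum>k<2^s. monoB (U - {s}) k) = 0" using Suc.IH Suc.prems by blast
    then show ?thesis using split a b by simp
  qed
qed

lemma monoB_mult: "monoB U k * monoB V k = monoB (U \<union> V) k"
  unfolding monoB_def by auto

lemma monoB_orth:
  assumes "finite U" "finite V" "card U + card V < s"
  shows "(\<Sum>k<2^s. (c * monoB U k) * (d * monoB V k)) = 0"
proof -
  have "card (U \<union> V) < card {..<s}" using assms card_Un_le[of U V] by simp
  then have "\<not> {..<s} \<subseteq> U \<union> V" using assms by (meson card_mono finite_UnI not_le)
  then obtain i0 where "i0 < s" "i0 \<notin> U \<union> V" by auto
  then have z: "(\<Sum>k<2^s. monoB (U \<union> V) k) = 0" by (rule monoB_sum_zero)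
  have "(\<Sum>k<2^s. (c * monoB U k) * (d * monoB V k)) = (\<Sum>k<2^s. (c * d) * monoB (U \<union> V) k)"
    by (intro sum.cong) (auto simp flip: monoB_mult simp: ac_simps)
  also have "\<dots> = (c * d) * (\<Sum>k<2^s. monoB (U \<union> V) k)" by (rule sum_distrib_left[symmetric])
  also have "\<dots> = 0" by (simp only: z mult_zero_right)
  finally show ?thesis .
qed

lemma foldr_bprod:
  assumes "\<forall>x\<in>set S. 1 \<le> x"
  shows "length (foldr bprod (map (bvec s) S) (bvec s 0)) = 2^s \<and>
    (\<forall>k<2^s. foldr bprod (map (bvec s) S) (bvec s 0) ! k = monoB ((\<lambda>i. i - 1) ` set S) k)"
  using assms
proof (induction S)
  case Nil
  then show ?case by (simp add: bvec_def monoB_def)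
next
  case (Cons x S)
  then have x1: "1 \<le> x" by simp
  from Cons have IH: "length (foldr bprod (map (bvec s) S) (bvec s 0)) = 2^s"
    "\<forall>k<2^s. foldr bprod (map (bvec s) S) (bvec s 0) ! k = monoB ((\<lambda>i. i - 1) ` set S) k" by auto
  have lx: "length (bvec s x) = 2^s" using x1 by (simp add: bvec_def)
  have ex: "bvec s x ! k = monoB {x - 1} k" if "k < 2^s" for k
    using x1 that by (simp add: bvec_def monoB_def)
  show ?case
  proof (intro conjI allI impI)
    show "length (foldr bprod (map (bvec s) (x # S)) (bvec s 0)) = 2^s"
      using IH lx by (simp add: bprod_def)
    fix k :: nat assume k: "k < 2^s"
    have "foldr bprod (map (bvec s) (x # S)) (bvec s 0) ! k = bvec s x ! k * foldr bprod (map (bvec s) S) (bvec s 0) ! k"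
      using IH lx k by (simp add: bprod_def)
    also have "\<dots> = monoB {x - 1} k * monoB ((\<lambda>i. i - 1) ` set S) k" using IH ex k by simp
    also have "\<dots> = monoB ((\<lambda>i. i - 1) ` set (x # S)) k" 
      using monoB_mult[of "{x - 1}" k "(\<lambda>i. i - 1) ` set S"] by (metis image_insert insert_is_Un list.simps(15))
    finally show "foldr bprod (map (bvec s) (x # S)) (bvec s 0) ! k = monoB ((\<lambda>i. i - 1) ` set (x # S)) k" .
  qed
qed

lemma subseqs_set: "S \<in> set (subseqs xs) \<Longrightarrow> set S \<subseteq> set xs"
  using subseqs_powset[of xs] by blast

lemma Bmat_row:
  assumes "\<beta> \<in> set (Bmat s j)"
  shows "length \<beta> = 2^s \<and> (\<exists>U. finite U \<and> int (card U) \<le> j \<and> (\<forall>k<2^s. \<beta> ! k = monoB U k))"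
proof -
  from assms obtain S where S: "S \<in> set (subseqs [1..<s+1])" "int (length S) = j"
    "\<beta> = foldr bprod (map (bvec s) S) (bvec s 0)"
    unfolding Bmat_def by (auto split: if_splits)
  have "\<forall>x\<in>set S. 1 \<le> x" using subseqs_set[OF S(1)] by auto
  note F = foldr_bprod[OF this, of s]
  have "card ((\<lambda>i. i - 1) ` set S) \<le> length S"
    by (metis card_image_le card_length finite_set order_trans)
  then show ?thesis using F S by (intro conjI exI[of _ "(\<lambda>i. i - 1) ` set S"]) auto
qed

lemma concat_nth_uniform:
  assumes "\<forall>x\<in>set xs. length x = n" "t < length xs" "k < n"
  shows "concat xs ! (t * n + k) = xs ! t ! k"
  using assms
proof (induction xs arbitrary: t)
  case Nil then show ?case by simp
next
  case (Cons x xs)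
  show ?case
  proof (cases t)
    case 0 then show ?thesis using Cons by (simp add: nth_append)
  next
    case (Suc t')
    then have "concat (x # xs) ! (t * n + k) = concat xs ! (t' * n + k)"
      using Cons.prems by (simp add: nth_append)
    then show ?thesis using Cons Suc by simp
  qed
qed

lemma length_concat_uniform:
  "\<forall>x\<in>set xs. length x = n \<Longrightarrow> length (concat xs) = length xs * n"
  by (induction xs) auto

definition rowgood :: "nat \<Rightarrow> nat \<Rightarrow> nat \<Rightarrow> vec \<Rightarrow> bool" where
  "rowgood s L r row \<longleftrightarrow> length row = 2^L * 2^s \<and>
     (\<forall>t<2^L. \<exists>c U. finite U \<and> card U \<le> r \<and> (\<forall>k<2^s. row ! (t * 2^s + k) = c * monoB U k))"

lemma length_rep_wvec:
  assumes "i < l"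
  shows "length (rep_vec (2^(l-i-1)) (wvec (i+1))) = 2^l"
proof -
  have two: "(2::nat) \<le> 2^(i+1)" by (induct i) auto
  have w0: "length (wvec (i+1)) = 2 + (2^(i+1) - 2)" by (simp add: wvec_def)
  have w: "length (wvec (i+1)) = 2^(i+1)" using two w0 by linarith
  have r: "length (rep_vec c v) = c * length v" for c v
    by (simp add: rep_vec_def length_concat sum_list_replicate)
  have "l - i - 1 + (i + 1) = l" using assms by simp
  then have p: "(2::nat)^(l-i-1) * 2^(i+1) = 2^l" by (metis power_add)
  show ?thesis unfolding r w p ..
qed

lemma Mblk_good:
  assumes "l \<le> m" "i \<le> l" "row \<in> set (Mblk m l (int r) i)"
  shows "rowgood (m-l) l r row"
proof (cases "i < l")
  case True
  define a where "a = rep_vec (2^(l-i-1)) (wvec (i+1))"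
  have la: "length a = 2^l" using length_rep_wvec[OF True] by (simp add: a_def)
  from assms(3) True obtain \<beta> where b: "\<beta> \<in> set (Bmat (m-l) (int r - int i))"
    "row = concat (map (\<lambda>x. map ((*) x) \<beta>) a)"
    unfolding Mblk_def kron_row_def a_def by auto
  from Bmat_row[OF b(1)] obtain U where U: "length \<beta> = 2^(m-l)" "finite U" "int (card U) \<le> int r - int i"
    "\<forall>k<2^(m-l). \<beta> ! k = monoB U k" by blast
  have unif: "\<forall>x\<in>set (map (\<lambda>x. map ((*) x) \<beta>) a). length x = 2^(m-l)" using U by auto
  show ?thesis unfolding rowgood_def
  proof (intro conjI allI impI)
    show "length row = 2^l * 2^(m-l)" using length_concat_uniform[OF unif] la b by simp
    fix t assume t: "t < (2::nat)^l"
    show "\<exists>c U. finite U \<and> card U \<le> r \<and> (\<forall>k<2^(m-l). row ! (t * 2^(m-l) + k) = c * monoB U k)"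
    proof (intro exI conjI allI impI)
      show "finite U" by fact
      show "card U \<le> r" using U(3) by simp
      fix k assume k: "k < (2::nat)^(m-l)"
      show "row ! (t * 2^(m-l) + k) = a ! t * monoB U k"
        using concat_nth_uniform[OF unif, of t k] t k la U b by simp
    qed
  qed
next
  case False
  then have il: "i = l" using assms by simp
  from assms(3) il obtain g where g: "g \<in> set (Gmat_RM (m-l) (int r - int l))"
    "row = g @ replicate (2^m - length g) 0"
    unfolding Mblk_def by auto
  from g(1) obtain j where j: "j \<le> int r - int l" "g \<in> set (Bmat (m-l) j)"
    unfolding Gmat_RM_def by auto
  from Bmat_row[OF j(2)] obtain U where U: "length g = 2^(m-l)" "finite U" "int (card U) \<le> j"
    "\<forall>k<2^(m-l). g ! k = monoB U k" by blast
  have pm: "(2::nat)^m = 2^l * 2^(m-l)" using assms(1) by (simp flip: power_add)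
  then have le: "length g \<le> 2^m" using U(1) by simp
  show ?thesis unfolding rowgood_def
  proof (intro conjI allI impI)
    show "length row = 2^l * 2^(m-l)" using g(2) le pm by simp
    fix t assume t: "t < (2::nat)^l"
    show "\<exists>c U. finite U \<and> card U \<le> r \<and> (\<forall>k<2^(m-l). row ! (t * 2^(m-l) + k) = c * monoB U k)"
    proof (cases "t = 0")
      case True
      show ?thesis
        apply (rule exI[of _ 1], rule exI[of _ U])
        using U j True g(2) by (simp add: nth_append)
    next
      case False
      have "row ! (t * 2^(m-l) + k) = 0" if k: "k < 2^(m-l)" for k
      proof -
        have "(2::nat)^(m-l) \<le> t * 2^(m-l)" using False by simp
        then have ge: "length g \<le> t * 2^(m-l) + k" using U(1) by linarith
        have "t * 2^(m-l) + k < 2^m" using t k pm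
        proof -
          have "t * 2^(m-l) + k < (t + 1) * 2^(m-l)" using k by simp
          also have "\<dots> \<le> 2^l * 2^(m-l)" using t by (intro mult_right_mono) auto
          finally show ?thesis using pm by simp
        qed
        then show ?thesis using ge g(2) by (simp add: nth_append)
      qed
      then show ?thesis by (intro exI[of _ 0] exI[of _ "{}"]) auto
    qed
  qed
qed

lemma Mstack_good:
  assumes "l \<le> m" "row \<in> set (Mstack m l (int r))"
  shows "rowgood (m-l) l r row"
proof -
  from assms(2) have "\<exists>i\<in>set [0..<l+1]. row \<in> set (Mblk m l (int r) i)"
    unfolding Mstack_def set_concat set_map by blast
  then obtain i where "i \<le> l" "row \<in> set (Mblk m l (int r) i)"
    by (metis atLeastLessThan_iff less_Suc_eq_le set_upt Suc_eq_plus1)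
  then show ?thesis using Mblk_good assms(1) by blast
qed

lemma subseqs_len: "n \<le> length xs \<Longrightarrow> \<exists>S\<in>set (subseqs xs). length S = n"
proof (induction xs arbitrary: n)
  case Nil then show ?case by simp
next
  case (Cons x xs)
  show ?case
  proof (cases "n \<le> length xs")
    case True
    then obtain S where "S \<in> set (subseqs xs)" "length S = n" using Cons.IH by blast
    then show ?thesis by (auto simp: Let_def)
  next
    case False
    then have n: "n = Suc (length xs)" using Cons.prems by simp
    obtain S where "S \<in> set (subseqs xs)" "length S = length xs" using Cons.IH by blast
    then show ?thesis using n by (auto simp: Let_def intro!: bexI[of _ "x # S"])
  qed
qed

lemma Mstack_nonempty:
  assumes "r \<le> m - l" "1 \<le> l"
  shows "Mstack m l (int r) \<noteq> []"
proof -
  obtain S where S: "S \<in> set (subseqs [1..<m-l+1])" "length S = r"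
  proof -
    have "r \<le> length [1..<m-l+1]" using assms by (simp only: length_upt)
    from subseqs_len[OF this] show ?thesis using that by blast
  qed
  then have "Bmat (m-l) (int r) \<noteq> []" unfolding Bmat_def
    by (auto simp: filter_empty_conv)
  then have "Mblk m l (int r) 0 \<noteq> []" using assms(2) by (simp add: Mblk_def kron_row_def)
  moreover have "[0..<l+1] = 0 # [1..<l+1]" by (simp add: upt_conv_Cons)
  ultimately show ?thesis unfolding Mstack_def by simp
qed

lemma semiG_block:
  assumes lm: "l \<le> m" and ne: "Mstack m l (int r) \<noteq> []"
  shows "\<exists>c U. finite U \<and> card U \<le> r \<and>
    (\<forall>k<2^(m-l). semiG m l (int r) q (b * 2^(m-l) + k) = c * monoB U k)"
proof -
  define M where "M = Mstack m l (int r)"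
  define K where "K = length M"
  define n where "n = (2::nat)^(m-l)"
  define j where "j = q div K"
  define \<rho> where "\<rho> = q mod K"
  have K0: "K > 0" using ne by (simp add: K_def M_def)
  have \<rho>K: "\<rho> < K" using K0 by (simp add: \<rho>_def)
  have n0: "n > 0" by (simp add: n_def)
  have pm: "(2::nat)^m = 2^l * n" using lm by (simp add: n_def flip: power_add)
  have G: "semiG m l (int r) q p = (if j * n \<le> p \<and> p < j * n + 2^m then (M ! \<rho>) ! (p - j * n) else 0)" for p
    unfolding semiG_def Let_def M_def K_def n_def j_def \<rho>_def by simp
  have rg: "rowgood (m-l) l r (M ! \<rho>)" using Mstack_good[OF lm] \<rho>K by (simp add: M_def K_def)
  show ?thesis
  proof (cases "j \<le> b \<and> b < j + 2^l")
    case True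
    define t where "t = b - j"
    have t: "t < 2^l" using True unfolding t_def by linarith
    from rg t obtain c U where cU: "finite U" "card U \<le> r"
      "\<forall>k<2^(m-l). (M ! \<rho>) ! (t * 2^(m-l) + k) = c * monoB U k"
      unfolding rowgood_def by blast
    show ?thesis
    proof (intro exI conjI allI impI)
      show "finite U" "card U \<le> r" by fact+
      fix k assume k: "k < (2::nat)^(m-l)"
      have b: "b = j + t" using True by (simp add: t_def)
      have e1: "b * n + k = j * n + (t * n + k)" using b by (simp add: algebra_simps)
      have "t * n + k < (t + 1) * n" using k by (simp add: n_def)
      also have "\<dots> \<le> 2^l * n" using t by (intro mult_right_mono) auto
      finally have "t * n + k < 2^m" using pm by simp
      then have c1: "j * n \<le> b * n + k \<and> b * n + k < j * n + 2^m" using e1 by linarith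
      have "b * n + k - j * n = t * n + k" using e1 by linarith
      then have "semiG m l (int r) q (b * n + k) = (M ! \<rho>) ! (t * n + k)"
        using G[of "b * n + k"] c1 by (simp only: if_True simp_thms)
      then show "semiG m l (int r) q (b * 2^(m-l) + k) = c * monoB U k" using cU k by (simp add: n_def)
    qed
  next
    case False
    have "semiG m l (int r) q (b * 2^(m-l) + k) = 0 * monoB {} k" if k: "k < 2^(m-l)" for k
    proof -
      have "\<not> (j * n \<le> b * n + k \<and> b * n + k < j * n + 2^m)"
      proof
        assume h: "j * n \<le> b * n + k \<and> b * n + k < j * n + 2^m"
        have "b * n + k < (b + 1) * n" using k by (simp add: n_def)
        then have "j * n < (b + 1) * n" using h by linarith
        then have "j < b + 1" by (metis mult_less_cancel2)
        moreover have "b * n < (j + 2^l) * n" using h pm by (simp only: add_mult_distrib) linarith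
        then have "b < j + 2^l" by (metis mult_less_cancel2)
        ultimately show False using False by simp
      qed
      then have "semiG m l (int r) q (b * n + k) = 0"
        using G[of "b * n + k"] by (simp only: if_False)
      then show ?thesis unfolding n_def by simp
    qed
    then show ?thesis by (intro exI[of _ 0] exI[of _ "{}"]) auto
  qed
qed

lemma semiG_orth:
  assumes lm: "l \<le> m" and ne: "Mstack m l (int r) \<noteq> []" and rs: "2 * r < m - l"
  shows "(\<Sum>p<N * 2^(m-l). semiG m l (int r) q p * semiG m l (int r) q' p) = 0"
proof -
  let ?n = "(2::nat)^(m-l)"
  let ?g = "\<lambda>p. semiG m l (int r) q p * semiG m l (int r) q' p"
  have "(\<Sum>p<N * ?n. ?g p) = (\<Sum>b<N. sum ?g {b * ?n..<b * ?n + ?n})"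
    by (rule sum.nat_group[symmetric])
  also have "\<dots> = (\<Sum>b<N. 0)"
  proof (rule sum.cong[OF refl])
    fix b
    obtain c U where cU: "finite U" "card U \<le> r" "\<forall>k<?n. semiG m l (int r) q (b * ?n + k) = c * monoB U k"
      using semiG_block[OF lm ne] by blast
    obtain d V where dV: "finite V" "card V \<le> r" "\<forall>k<?n. semiG m l (int r) q' (b * ?n + k) = d * monoB V k"
      using semiG_block[OF lm ne] by blast
    have "sum ?g {b * ?n..<b * ?n + ?n} = sum ?g {0 + b * ?n..<?n + b * ?n}" by (simp add: add.commute)
    also have "\<dots> = (\<Sum>k=0..<?n. ?g (k + b * ?n))" by (rule sum.shift_bounds_nat_ivl)
    also have "\<dots> = (\<Sum>k<?n. ?g (b * ?n + k))" by (simp add: lessThan_atLeast0 add.commute)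
    also have "\<dots> = (\<Sum>k<?n. (c * monoB U k) * (d * monoB V k))"
      using cU dV by (intro sum.cong) auto
    also have "\<dots> = 0"
    proof -
      have "card U + card V < m - l" using cU(2) dV(2) rs by linarith
      then show ?thesis by (rule monoB_orth[OF cU(1) dV(1)])
    qed
    finally show "sum ?g {b * ?n..<b * ?n + ?n} = 0" .
  qed
  finally show ?thesis by simp
qed

lemma semiG_support:
  assumes "semiG m l r q p \<noteq> 0"
  shows "p < q * 2^(m-l) + 2^m"
proof -
  define K where "K = length (Mstack m l r)"
  have "q div K * 2^(m-l) \<le> q * 2^(m-l)" by (intro mult_right_mono) auto
  moreover have "p < q div K * 2^(m-l) + 2^m"
    using assms unfolding semiG_def Let_def K_def[symmetric] by (auto split: if_splits)
  ultimately show ?thesis by linarith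
qed

lemma code_bound:
  assumes fin: "finite Su" and Sub: "Su \<subseteq> A" and finA: "finite A"
    and nz: "(\<Sum>q\<in>Su. u q * semiG m l r q p) \<noteq> 0"
  shows "p < (\<Sum>A + 2^m) * 2^(m-l)"
proof -
  from nz obtain q where q: "q \<in> Su" "semiG m l r q p \<noteq> 0"
    by (metis (no_types, lifting) mult_zero_right sum.neutral)
  have "p < q * 2^(m-l) + 2^m" using semiG_support[OF q(2)] .
  also have "q \<le> \<Sum>A" using q(1) Sub finA by (intro member_le_sum) auto
  then have "q * 2^(m-l) + 2^m \<le> (\<Sum>A) * 2^(m-l) + 2^m * 2^(m-l)"
    by (intro add_mono mult_right_mono) auto
  also have "\<dots> = (\<Sum>A + 2^m) * 2^(m-l)" by (simp add: algebra_simps)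
  finally show ?thesis .
qed

lemma code_orth:
  assumes lm: "l \<le> m" and ne: "Mstack m l (int r) \<noteq> []" and rs: "2 * r < m - l"
    and u: "finite {q. u q \<noteq> 0}" and u': "finite {q. u' q \<noteq> 0}"
  defines "G \<equiv> semiG m l (int r)"
  shows "inner2 (\<lambda>p. \<Sum>q\<in>{q. u q \<noteq> 0}. u q * G q p) (\<lambda>p. \<Sum>q\<in>{q. u' q \<noteq> 0}. u' q * G q p) = 0"
proof -
  define Su where "Su = {q. u q \<noteq> 0}"
  define Su' where "Su' = {q. u' q \<noteq> 0}"
  define c where "c = (\<lambda>p. \<Sum>q\<in>Su. u q * G q p)"
  define c' where "c' = (\<lambda>p. \<Sum>q\<in>Su'. u' q * G q p)"
  define A where "A = Su \<union> Su'"
  define N where "N = (\<Sum>A + 2^m) * 2^(m-l)"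
  have fA: "finite A" using u u' by (simp add: A_def Su_def Su'_def)
  have bc: "c p \<noteq> 0 \<Longrightarrow> p < N" for p
    unfolding c_def N_def G_def using code_bound[of Su A u m l "int r" p] u fA by (auto simp: A_def Su_def)
  have bc': "c' p \<noteq> 0 \<Longrightarrow> p < N" for p
    unfolding c'_def N_def G_def using code_bound[of Su' A u' m l "int r" p] u' fA by (auto simp: A_def Su'_def)
  have "inner2 c c' = (\<Sum>p<N. c p * c' p)"
    unfolding inner2_def
    by (rule sum.mono_neutral_left) (auto intro: bc)
  also have "\<dots> = (\<Sum>p<N. \<Sum>q\<in>Su. \<Sum>q'\<in>Su'. (u q * u' q') * (G q p * G q' p))"
    unfolding c_def c'_def sum_product by (intro sum.cong refl) (simp add: ac_simps)
  also have "\<dots> = (\<Sum>q\<in>Su. \<Sum>q'\<in>Su'. \<Sum>p<N. (u q * u' q') * (G q p * G q' p))"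
    by (subst sum.swap) (simp add: sum.swap[of _ _ "{..<N}"])
  also have "\<dots> = (\<Sum>q\<in>Su. \<Sum>q'\<in>Su'. (u q * u' q') * (\<Sum>p<N. G q p * G q' p))"
    by (simp only: sum_distrib_left)
  also have "\<dots> = 0"
  proof -
    have "(\<Sum>p<N. G q p * G q' p) = 0" for q q'
      unfolding N_def G_def by (rule semiG_orth[OF lm ne rs])
    then show ?thesis by simp
  qed
  finally show ?thesis unfolding c_def c'_def Su_def Su'_def .
qed

theorem mainTheorem12:
  fixes l m r :: nat
  assumes "1 \<le> l" and "l \<le> m"
    and "int r \<le> (int m - int l - 1) div 2"
  shows "gen_code (semiG m l (int r)) \<subseteq> dual_code (gen_code (semiG m l (int r)))"
proof
  have "2 * ((int m - int l - 1) div 2) \<le> int m - int l - 1" by presburger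
  then have rs: "2 * r < m - l" using assms(2,3) by linarith
  have ne: "Mstack m l (int r) \<noteq> []" using Mstack_nonempty[of r m l] rs assms(1) by simp
  note lm = assms(2)
  fix c assume "c \<in> gen_code (semiG m l (int r))"
  then obtain u where u: "u \<in> Gamma2" "c = (\<lambda>p. \<Sum>q\<in>{q. u q \<noteq> 0}. u q * semiG m l (int r) q p)"
    unfolding gen_code_def by blast
  have fu: "finite {q. u q \<noteq> 0}" using u(1) by (simp add: Gamma2_def)
  have "c \<in> Gamma2"
  proof -
    define N where "N = (\<Sum>{q. u q \<noteq> 0} + 2^m) * 2^(m-l)"
    have "{p. c p \<noteq> 0} \<subseteq> {..<N}"
    proof
      fix p assume "p \<in> {p. c p \<noteq> 0}"
      then have "(\<Sum>q\<in>{q. u q \<noteq> 0}. u q * semiG m l (int r) q p) \<noteq> 0" using u(2) by simp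
      then show "p \<in> {..<N}" unfolding N_def lessThan_iff by (rule code_bound[OF fu subset_refl fu])
    qed
    then show ?thesis unfolding Gamma2_def using finite_subset by blast
  qed
  moreover have "\<forall>c'\<in>gen_code (semiG m l (int r)). inner2 c' c = 0"
  proof
    fix c' assume "c' \<in> gen_code (semiG m l (int r))"
    then obtain u' where u': "u' \<in> Gamma2" "c' = (\<lambda>p. \<Sum>q\<in>{q. u' q \<noteq> 0}. u' q * semiG m l (int r) q p)"
      unfolding gen_code_def by blast
    have fu': "finite {q. u' q \<noteq> 0}" using u'(1) by (simp add: Gamma2_def)
    show "inner2 c' c = 0" unfolding u(2) u'(2) by (rule code_orth[OF lm ne rs fu' fu])
  qed
  ultimately show "c \<in> dual_code (gen_code (semiG m l (int r)))" unfolding dual_code_def by blast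
qed

end
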